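(* Let $n\geq 3$, let $\Omega\subset\mathbb{R}^n$ be a bounded simple rotationally symmetric domain along the $x_n$ axis, and let $f(x,u)\in C^{1,1}(\Omega,\mathbb{R})$ be convex with respect to $u$. If $u$ and $v$ are positive stable solutions of $$-\Delta w=f(x,w)\ \text{in}\ \Omega,\qquad w=0\ \text{on}\ \partial\Omega,$$ then $u=v$ in $\Omega$; i.e., a positive stable solution of this problem is unique.
   Context: A domain $\Omega\subset\mathbb{R}^n$ is simple rotationally symmetric along the $x_n$ axis if (1) it is symmetric with respect to $x_n=0$; (2) it is invariant under every $A\in O(n)$ fixing the $x_n$ axis; (3) for each $i=1,\dots,n$, any segment joining two points of $\Omega$ and parallel to the $x_i$ axis lies in $\Omega$. A solution $u$ is stable if $\int_\Omega|\nabla\phi|^2dx-\int_\Omega f'(x,u)\phi^2dx>0$ for every nonzero $\phi\in H^1_0(\Omega)$, where $f'$ is the derivative of $f$ with respect to its last variable; equivalently, the first Dirichlet eigenvalue of $-\Delta-f'(x,u)$ in $\Omega$ is positive. *)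

theory Defs
  imports "HOL-Analysis.Analysis"
begin

definition partial :: "(real^'n \<Rightarrow> real) \<Rightarrow> 'n \<Rightarrow> real^'n \<Rightarrow> real" where
  "partial u i x = deriv (\<lambda>t. u (x + t *\<^sub>R axis i 1)) 0"

definition grad :: "(real^'n \<Rightarrow> real) \<Rightarrow> real^'n \<Rightarrow> real^'n" where
  "grad u x = (\<chi> i. partial u i x)"

definition laplacian :: "(real^'n \<Rightarrow> real) \<Rightarrow> real^'n \<Rightarrow> real" where
  "laplacian u x = (\<Sum>i\<in>UNIV. partial (partial u i) i x)"

definition C2_on :: "(real^'n) set \<Rightarrow> (real^'n \<Rightarrow> real) \<Rightarrow> bool" where
  "C2_on S u \<longleftrightarrow> continuous_on S u
     \<and> (\<forall>i. \<forall>x\<in>S. (\<lambda>t. u (x + t *\<^sub>R axis i 1)) differentiable (at 0))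
     \<and> (\<forall>i. continuous_on S (partial u i))
     \<and> (\<forall>i j. \<forall>x\<in>S. (\<lambda>t. partial u i (x + t *\<^sub>R axis j 1)) differentiable (at 0))
     \<and> (\<forall>i j. continuous_on S (partial (partial u i) j))"

definition Cc1 :: "(real^'n) set \<Rightarrow> (real^'n \<Rightarrow> real) \<Rightarrow> bool" where
  "Cc1 S \<psi> \<longleftrightarrow> (\<forall>x. \<psi> differentiable (at x))
     \<and> (\<forall>i. continuous_on UNIV (partial \<psi> i))
     \<and> compact (closure {x. \<psi> x \<noteq> 0}) \<and> closure {x. \<psi> x \<noteq> 0} \<subseteq> S"

text \<open>(phi, g) belongs to H^1_0(S) with weak gradient g: phi is the H^1(S)-limit of
  compactly supported C^1 functions (the completion definition of H^1_0).\<close>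
definition H10 :: "(real^'n) set \<Rightarrow> (real^'n \<Rightarrow> real) \<Rightarrow> (real^'n \<Rightarrow> real^'n) \<Rightarrow> bool" where
  "H10 S \<phi> g \<longleftrightarrow> \<phi> \<in> borel_measurable lebesgue \<and> g \<in> borel_measurable lebesgue
     \<and> (\<exists>\<psi>::nat \<Rightarrow> real^'n \<Rightarrow> real. (\<forall>k. Cc1 S (\<psi> k))
        \<and> (\<lambda>k. \<integral>\<^sup>+ x. indicator S x * ennreal ((\<psi> k x - \<phi> x)\<^sup>2) \<partial>lebesgue) \<longlonglongrightarrow> 0
        \<and> (\<lambda>k. \<integral>\<^sup>+ x. indicator S x * ennreal ((norm (grad (\<psi> k) x - g x))\<^sup>2) \<partial>lebesgue) \<longlonglongrightarrow> 0)"

definition C11_nonlin :: "(real^'n) set \<Rightarrow> (real^'n \<Rightarrow> real \<Rightarrow> real) \<Rightarrow> bool" where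
  "C11_nonlin S f \<longleftrightarrow> (\<exists>Df. (\<forall>p \<in> S \<times> UNIV. ((\<lambda>q. f (fst q) (snd q)) has_derivative Df p) (at p))
     \<and> (\<forall>M::real. \<exists>L. \<forall>p \<in> S \<times> {-M..M}. \<forall>q \<in> S \<times> {-M..M}.
          onorm (\<lambda>h. Df p h - Df q h) \<le> L * dist p q))"

definition fu :: "(real^'n \<Rightarrow> real \<Rightarrow> real) \<Rightarrow> real^'n \<Rightarrow> real \<Rightarrow> real" where
  "fu f x t = deriv (\<lambda>s. f x s) t"

definition simple_rot_sym :: "'n \<Rightarrow> (real^'n) set \<Rightarrow> bool" where
  "simple_rot_sym k \<Omega> \<longleftrightarrow>
     (\<forall>x. x \<in> \<Omega> \<longleftrightarrow> (\<chi> i. if i = k then - x $ i else x $ i) \<in> \<Omega>)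
   \<and> (\<forall>A. orthogonal_transformation A \<and> A (axis k 1) = axis k 1 \<longrightarrow> (\<forall>x\<in>\<Omega>. A x \<in> \<Omega>))
   \<and> (\<forall>i. \<forall>x\<in>\<Omega>. \<forall>y\<in>\<Omega>. (\<forall>j. j \<noteq> i \<longrightarrow> x $ j = y $ j) \<longrightarrow> closed_segment x y \<subseteq> \<Omega>)"

definition is_solution :: "(real^'n) set \<Rightarrow> (real^'n \<Rightarrow> real \<Rightarrow> real) \<Rightarrow> (real^'n \<Rightarrow> real) \<Rightarrow> bool" where
  "is_solution S f w \<longleftrightarrow> C2_on S w \<and> continuous_on (closure S) w
     \<and> (\<forall>x\<in>S. - laplacian w x = f x (w x))
     \<and> (\<forall>x\<in>frontier S. w x = 0)"

definition stable :: "(real^'n) set \<Rightarrow> (real^'n \<Rightarrow> real \<Rightarrow> real) \<Rightarrow> (real^'n \<Rightarrow> real) \<Rightarrow> bool" where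
  "stable S f w \<longleftrightarrow> (\<forall>\<phi> g. H10 S \<phi> g \<and> \<not> (AE x in lebesgue. x \<in> S \<longrightarrow> \<phi> x = 0) \<longrightarrow>
      (LINT x:S|lebesgue. (norm (g x))\<^sup>2) - (LINT x:S|lebesgue. fu f x (w x) * (\<phi> x)\<^sup>2) > 0)"

end

theory Submission
  imports Defs
begin

definition lined :: "(real^'n \<Rightarrow> real) \<Rightarrow> 'n \<Rightarrow> real^'n \<Rightarrow> real \<Rightarrow> bool" where
  "lined F i y D \<longleftrightarrow> ((\<lambda>t. F (y + t *\<^sub>R axis i 1)) has_real_derivative D) (at 0)"

lemma lined_at:
  assumes "lined F i (y + s *\<^sub>R axis i 1) D"
  shows "((\<lambda>t. F (y + t *\<^sub>R axis i 1)) has_real_derivative D) (at s)"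
proof -
  have "((\<lambda>t. F (y + (t + s) *\<^sub>R axis i 1)) has_real_derivative D) (at 0)"
    using assms unfolding lined_def by (simp add: algebra_simps scaleR_add_left)
  then show ?thesis using DERIV_shift[of "\<lambda>t. F (y + t *\<^sub>R axis i 1)" D 0 s] by simp
qed

lemma lined_zero_outside:
  assumes "closed K" "y \<notin> K" "\<And>z. z \<notin> K \<Longrightarrow> F z = 0"
  shows "lined F i y 0"
proof -
  have op0: "open ((\<lambda>t::real. y + t *\<^sub>R axis i 1) -` (- K))"
    using assms(1) by (intro open_vimage continuous_intros) auto
  have op: "open {t::real. y + t *\<^sub>R axis i 1 \<in> - K}"
    using op0 by (simp add: vimage_def)
  show ?thesis unfolding lined_def
    by (rule has_field_derivative_transform_within_open[OF DERIV_const op]) (use assms in auto)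
qed

lemma lined_unique: "lined F i y D \<Longrightarrow> lined F i y D' \<Longrightarrow> D = D'"
  unfolding lined_def using DERIV_unique by blast

lemma lined_partial: "lined F i y D \<Longrightarrow> partial F i y = D"
  unfolding lined_def partial_def by (rule DERIV_imp_deriv)

lemma integrable_cont_compact:
  fixes F :: "real^'n \<Rightarrow> real"
  assumes "continuous_on UNIV F" "compact K" "\<And>y. y \<notin> K \<Longrightarrow> F y = 0"
  shows "integrable lborel F"
proof -
  have "integrable lborel (\<lambda>x. indicator K x *\<^sub>R F x)"
    by (rule borel_integrable_compact) (use assms continuous_on_subset[OF assms(1)] in auto)
  moreover have "(\<lambda>x. indicator K x *\<^sub>R F x) = F"
    using assms(3) by (auto simp: indicator_def fun_eq_iff)
  ultimately show ?thesis by simp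
qed

lemma KL:
  fixes F D :: "real^'n \<Rightarrow> real"
  assumes Fc: "continuous_on UNIV F" and Dc: "continuous_on UNIV D" and K: "compact K"
    and F0: "\<And>y. y \<notin> K \<Longrightarrow> F y = 0" and L: "\<And>y. lined F i y (D y)"
  shows "integral\<^sup>L lborel D = 0"
proof -
  let ?e = "axis i 1 :: real^'n"
  have ne: "norm ?e = 1" by simp
  have D0: "D y = 0" if "y \<notin> K" for y
    using lined_unique[OF L lined_zero_outside[OF compact_imp_closed[OF K] that F0]] by simp
  obtain B where B: "\<And>y. \<bar>D y\<bar> \<le> B"
  proof -
    have "bounded (D ` K)" using K Dc by (intro compact_imp_bounded compact_continuous_image) (auto intro: continuous_on_subset)
    then obtain B where "\<And>y. y \<in> K \<Longrightarrow> \<bar>D y\<bar> \<le> B" by (auto simp: bounded_iff)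
    then show ?thesis using D0 that[of "max B 0"] by (metis abs_zero max.cobounded1 max.cobounded2 order.trans)
  qed
  define K' where "K' = {x + y |x y. x \<in> K \<and> y \<in> cball (0::real^'n) 1}"
  have K': "compact K'" unfolding K'_def by (intro compact_sums K compact_cball)
  define h where "h m = 1 / real (Suc m)" for m
  have hpos: "h m > 0" for m by (simp add: h_def)
  have hle: "h m \<le> 1" for m by (simp add: h_def)
  define q where "q m y = (F (y + h m *\<^sub>R ?e) - F y) / h m" for m y
  have Fint: "integrable lborel F" by (rule integrable_cont_compact[OF Fc K F0])
  have Fm[measurable]: "F \<in> borel_measurable borel" by (rule borel_measurable_continuous_onI[OF Fc])
  have Dm[measurable]: "D \<in> borel_measurable borel" by (rule borel_measurable_continuous_onI[OF Dc])
  have trans: "integral\<^sup>L lborel (\<lambda>y. F (y + c)) = integral\<^sup>L lborel F" for c :: "real^'n"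
  proof -
    have "integral\<^sup>L lborel F = integral\<^sup>L (distr lborel borel ((+) c)) F"
      by (simp add: lborel_distr_plus)
    also have "\<dots> = integral\<^sup>L lborel (\<lambda>y. F (c + y))"
      by (rule integral_distr) auto
    finally show ?thesis by (simp add: add.commute)
  qed
  have transi: "integrable lborel (\<lambda>y. F (y + c))" for c :: "real^'n"
  proof -
    have "integrable (distr lborel borel ((+) c)) F"
      by (simp add: lborel_distr_plus Fint)
    then have "integrable lborel (\<lambda>y. F (c + y))"
      by (subst (asm) integrable_distr_eq) auto
    then show ?thesis by (simp add: add.commute)
  qed
  have q0: "integral\<^sup>L lborel (q m) = 0" for m
  proof -
    have "integral\<^sup>L lborel (q m) = (integral\<^sup>L lborel (\<lambda>y. F (y + h m *\<^sub>R ?e)) - integral\<^sup>L lborel F) / h m"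
      unfolding q_def using transi Fint by simp
    then show ?thesis using trans by simp
  qed
  have lim: "(\<lambda>m. integral\<^sup>L lborel (q m)) \<longlonglongrightarrow> integral\<^sup>L lborel D"
  proof (rule integral_dominated_convergence[where w = "\<lambda>y. B * indicator K' y"])
    show "D \<in> borel_measurable lborel" by simp
    show "q m \<in> borel_measurable lborel" for m unfolding q_def by measurable
    show "integrable lborel (\<lambda>y. B * indicator K' y)"
      using K' by (intro integrable_mult_right integrable_real_indicator) (use emeasure_compact_finite[OF K'] in \<open>auto simp: borel_compact\<close>)
    show "AE y in lborel. (\<lambda>m. q m y) \<longlonglongrightarrow> D y"
    proof (intro AE_I2)
      fix y
      have d: "((\<lambda>t. F (y + t *\<^sub>R ?e)) has_real_derivative D y) (at 0)" using L unfolding lined_def by simp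
      then have "((\<lambda>t. (F (y + t *\<^sub>R ?e) - F (y + 0 *\<^sub>R ?e)) / (t - 0)) \<longlongrightarrow> D y) (at 0)"
        unfolding has_field_derivative_iff by simp
      moreover have "filterlim h (at 0) sequentially"
      proof (rule filterlim_atI)
        show "h \<longlonglongrightarrow> 0" unfolding h_def by (rule LIMSEQ_Suc[OF lim_inverse_n']) 
        show "\<forall>\<^sub>F m in sequentially. h m \<noteq> 0" using hpos by (simp add: order_less_imp_not_eq2)
      qed
      ultimately have "((\<lambda>t. (F (y + t *\<^sub>R ?e) - F (y + 0 *\<^sub>R ?e)) / (t - 0)) \<circ> h) \<longlonglongrightarrow> D y"
        by (rule filterlim_compose[unfolded comp_def[symmetric]])
      then show "(\<lambda>m. q m y) \<longlonglongrightarrow> D y" unfolding q_def comp_def by simp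
    qed
    show "AE y in lborel. norm (q m y) \<le> B * indicator K' y" for m
    proof (intro AE_I2)
      fix y
      have der: "\<And>t. ((\<lambda>t. F (y + t *\<^sub>R ?e)) has_real_derivative D (y + t *\<^sub>R ?e)) (at t)"
      proof -
        fix t show "((\<lambda>t. F (y + t *\<^sub>R ?e)) has_real_derivative D (y + t *\<^sub>R ?e)) (at t)"
          by (rule lined_at) (rule L)
      qed
      obtain z where z: "F (y + h m *\<^sub>R ?e) - F (y + 0 *\<^sub>R ?e) = (h m - 0) * D (y + z *\<^sub>R ?e)"
        using MVT2[OF hpos[of m], of "\<lambda>t. F (y + t *\<^sub>R ?e)" "\<lambda>t. D (y + t *\<^sub>R ?e)"] der by blast
      have qz: "q m y = D (y + z *\<^sub>R ?e)" unfolding q_def using z hpos[of m] by (simp add: field_simps)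
      show "norm (q m y) \<le> B * indicator K' y"
      proof (cases "y \<in> K'")
        case True then show ?thesis using qz B by simp
      next
        case False
        have "y \<notin> K"
        proof
          assume "y \<in> K" then have "y + 0 \<in> K'" unfolding K'_def by fastforce
          with False show False by simp
        qed
        moreover have "y + h m *\<^sub>R ?e \<notin> K"
        proof
          assume "y + h m *\<^sub>R ?e \<in> K"
          moreover have "- (h m *\<^sub>R ?e) \<in> cball 0 1" using ne hpos[of m] hle[of m] by simp
          ultimately have "(y + h m *\<^sub>R ?e) + - (h m *\<^sub>R ?e) \<in> K'" unfolding K'_def by blast
          with False show False by simp
        qed
        ultimately show ?thesis using F0 False by (simp add: q_def)
      qed
    qed
  qed
  then show ?thesis using q0 by (simp add: LIMSEQ_const_iff)
qed

lemma mvi: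
  fixes g g' :: "real \<Rightarrow> real"
  assumes d: "\<And>t. t \<in> closed_segment 0 b \<Longrightarrow> (g has_real_derivative g' t) (at t)"
    and bd: "\<And>t. t \<in> closed_segment 0 b \<Longrightarrow> \<bar>g' t\<bar> \<le> B"
  shows "\<bar>g b - g 0\<bar> \<le> B * \<bar>b\<bar>"
proof -
  have "norm (g b - g 0) \<le> B * norm (b - 0)"
  proof (rule differentiable_bound[where f' = "\<lambda>t. (*) (g' t)"])
    show "convex (closed_segment 0 b)" by simp
    show "(g has_derivative (*) (g' t)) (at t within closed_segment 0 b)" if "t \<in> closed_segment 0 b" for t
      using d[OF that] unfolding has_field_derivative_def by (rule has_derivative_at_withinI)
    show "onorm ((*) (g' t)) \<le> B" if "t \<in> closed_segment 0 b" for t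
    proof (rule onorm_bound)
      show "0 \<le> B" using bd[OF that] by simp
      show "norm (g' t * x) \<le> B * norm x" for x
        using bd[OF that] by (simp add: abs_mult mult_right_mono)
    qed
  qed auto
  then show ?thesis by simp
qed

lemma PD:
  fixes F :: "real^'n \<Rightarrow> real"
  assumes S: "open S" and x: "x \<in> S" and L: "\<And>i y. y \<in> S \<Longrightarrow> lined F i y (P i y)"
    and Pc: "\<And>i. continuous_on S (P i)"
  shows "(F has_derivative (\<lambda>h. \<Sum>i\<in>UNIV. h$i * P i x)) (at x)"
proof -
  have C: "\<forall>\<epsilon>>0. \<exists>\<delta>>0. \<forall>h. (\<forall>j. j \<notin> I \<longrightarrow> h$j = 0) \<and> norm h < \<delta> \<longrightarrow>
     \<bar>F (x + h) - F x - (\<Sum>i\<in>I. h$i * P i x)\<bar> \<le> \<epsilon> * norm h" if "finite I" for I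
    using that
  proof (induction I rule: finite_induct)
    case empty
    have h0: "h = 0" if "\<forall>j. h$j = 0" for h :: "real^'n"
      using that by (simp add: vec_eq_iff)
    show ?case by (intro allI impI exI[of _ 1]) (auto dest!: h0)
  next
    case (insert j I)
    show ?case
    proof (intro allI impI)
      fix \<epsilon> :: real assume "\<epsilon> > 0"
      then have e2: "\<epsilon>/2 > 0" by simp
      obtain \<delta>1 where d1: "\<delta>1 > 0" and IH: "\<And>h. (\<forall>j. j \<notin> I \<longrightarrow> h$j = 0) \<and> norm h < \<delta>1 \<Longrightarrow>
         \<bar>F (x + h) - F x - (\<Sum>i\<in>I. h$i * P i x)\<bar> \<le> \<epsilon>/2 * norm h"
        using insert.IH e2 by blast
      obtain \<delta>2 where d2: "\<delta>2 > 0" and cj: "\<And>y. y \<in> S \<Longrightarrow> dist y x < \<delta>2 \<Longrightarrow> dist (P j y) (P j x) < \<epsilon>/2"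
        using Pc[of j] x e2 unfolding continuous_on_iff by blast
      obtain \<delta>3 where d3: "\<delta>3 > 0" and b3: "ball x \<delta>3 \<subseteq> S"
        using S x open_contains_ball by blast
      define \<delta> where "\<delta> = min \<delta>1 (min \<delta>2 \<delta>3)"
      have dpos: "\<delta> > 0" using d1 d2 d3 by (simp add: \<delta>_def)
      show "\<exists>\<delta>>0. \<forall>h. (\<forall>ja. ja \<notin> insert j I \<longrightarrow> h $ ja = 0) \<and> norm h < \<delta> \<longrightarrow>
          \<bar>F (x + h) - F x - (\<Sum>i\<in>insert j I. h $ i * P i x)\<bar> \<le> \<epsilon> * norm h"
      proof (intro exI[of _ \<delta>] conjI allI impI dpos)
        fix h :: "real^'n"
        assume hh: "(\<forall>ja. ja \<notin> insert j I \<longrightarrow> h $ ja = 0) \<and> norm h < \<delta>"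
        define h' where "h' = (\<chi> k. if k = j then 0 else h$k)"
        have hsplit: "h = h' + (h$j) *\<^sub>R axis j 1"
          by (simp add: h'_def vec_eq_iff axis_def)
        have h'n: "norm h' \<le> norm h"
          by (rule norm_le_componentwise_cart) (simp add: h'_def)
        have h'supp: "\<forall>k. k \<notin> I \<longrightarrow> h'$k = 0" using hh by (simp add: h'_def)
        have sumeq: "(\<Sum>i\<in>I. h' $ i * P i x) = (\<Sum>i\<in>I. h $ i * P i x)"
          using insert.hyps(2) by (intro sum.cong) (auto simp: h'_def)
        have A: "\<bar>F (x + h') - F x - (\<Sum>i\<in>I. h$i * P i x)\<bar> \<le> \<epsilon>/2 * norm h"
        proof -
          have "\<bar>F (x + h') - F x - (\<Sum>i\<in>I. h'$i * P i x)\<bar> \<le> \<epsilon>/2 * norm h'"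
            using IH h'supp h'n hh by (simp add: \<delta>_def)
          also have "\<dots> \<le> \<epsilon>/2 * norm h" using h'n \<open>\<epsilon> > 0\<close> by simp
          finally show ?thesis using sumeq by simp
        qed
        define g where "g t = F (x + h' + t *\<^sub>R axis j 1) - t * P j x" for t
        have pt: "norm (h' + t *\<^sub>R axis j 1) \<le> norm h" if "t \<in> closed_segment 0 (h$j)" for t
        proof (rule norm_le_componentwise_cart)
          fix k
          have "\<bar>t\<bar> \<le> \<bar>h$j\<bar>" using that by (auto simp: closed_segment_eq_real_ivl split: if_splits)
          then show "norm ((h' + t *\<^sub>R axis j 1) $ k) \<le> norm (h $ k)"
            by (simp add: h'_def axis_def)
        qed
        have B: "\<bar>g (h$j) - g 0\<bar> \<le> \<epsilon>/2 * \<bar>h$j\<bar>"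
        proof (rule mvi)
          fix t assume t: "t \<in> closed_segment 0 (h$j)"
          have inb: "x + h' + t *\<^sub>R axis j 1 \<in> ball x \<delta>"
          proof -
            have dv: "dist x (x + v) = norm v" for v :: "real^'n"
              by (simp add: dist_norm)
            have "dist x (x + h' + t *\<^sub>R axis j 1) = norm (h' + t *\<^sub>R axis j 1)"
              using dv[of "h' + t *\<^sub>R axis j 1"] by (simp only: add.assoc)
            then show ?thesis using pt[OF t] hh by (simp only: mem_ball) linarith
          qed
          then have inS: "x + h' + t *\<^sub>R axis j 1 \<in> S" using b3 by (auto simp: \<delta>_def)
          have "((\<lambda>t. F (x + h' + t *\<^sub>R axis j 1)) has_real_derivative P j (x + h' + t *\<^sub>R axis j 1)) (at t)"
            by (rule lined_at) (rule L[OF inS])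
          then show "(g has_real_derivative (P j (x + h' + t *\<^sub>R axis j 1) - P j x)) (at t)"
            unfolding g_def by (auto intro!: derivative_eq_intros)
          have "dist (x + h' + t *\<^sub>R axis j 1) x < \<delta>2" using inb by (simp add: \<delta>_def dist_commute)
          then show "\<bar>P j (x + h' + t *\<^sub>R axis j 1) - P j x\<bar> \<le> \<epsilon>/2"
            using cj[OF inS] by (simp add: dist_real_def)
        qed
        have "F (x + h) - F x - (\<Sum>i\<in>insert j I. h $ i * P i x)
             = (g (h$j) - g 0) + (F (x + h') - F x - (\<Sum>i\<in>I. h$i * P i x))"
        proof -
          have eq: "x + h' + h$j *\<^sub>R axis j 1 = x + h" by (metis hsplit add.assoc)
          show ?thesis using insert.hyps by (simp add: g_def eq)
        qed
        then have "\<bar>F (x + h) - F x - (\<Sum>i\<in>insert j I. h $ i * P i x)\<bar> \<le> \<epsilon>/2 * \<bar>h$j\<bar> + \<epsilon>/2 * norm h"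
          using A B by linarith
        also have "\<dots> \<le> \<epsilon> * norm h"
        proof -
          have "\<epsilon> * \<bar>h$j\<bar> \<le> \<epsilon> * norm h"
            using component_le_norm_cart[of h j] \<open>\<epsilon>>0\<close> by (simp add: mult_left_mono)
          then show ?thesis by simp
        qed
        finally show "\<bar>F (x + h) - F x - (\<Sum>i\<in>insert j I. h $ i * P i x)\<bar> \<le> \<epsilon> * norm h" .
      qed
    qed
  qed
  have bl: "bounded_linear (\<lambda>h::real^'n. \<Sum>i\<in>UNIV. h$i * P i x)"
    by (intro bounded_linear_sum bounded_linear_mult_left[THEN bounded_linear_compose] bounded_linear_vec_nth)
  show ?thesis unfolding has_derivative_at_alt
  proof (intro conjI bl allI impI)
    fix \<epsilon> :: real assume "\<epsilon> > 0"
    then obtain \<delta> where "\<delta> > 0" and d: "\<And>h. norm h < \<delta> \<Longrightarrow>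
       \<bar>F (x + h) - F x - (\<Sum>i\<in>UNIV. h$i * P i x)\<bar> \<le> \<epsilon> * norm h"
      using C[of UNIV] by auto
    show "\<exists>d>0. \<forall>y. norm (y - x) < d \<longrightarrow>
      norm (F y - F x - (\<Sum>i\<in>UNIV. (y - x) $ i * P i x)) \<le> \<epsilon> * norm (y - x)"
      using d[of "_ - x"] \<open>\<delta> > 0\<close> by (intro exI[of _ \<delta>]) auto
  qed
qed

definition Gf :: "real \<Rightarrow> real \<Rightarrow> real" where
  "Gf d t = (if t \<in> {..d} then 0 else (t - d)^2 / t)"
definition Gd :: "real \<Rightarrow> real \<Rightarrow> real" where
  "Gd d t = (if t \<in> {..d} then 0 else 1 - d^2 / t^2)"

lemma G_deriv:
  assumes d: "d > 0"
  shows "(Gf d has_real_derivative Gd d t) (at t)"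
proof -
  have cl: "closure {..d} \<inter> closure {d<..} = {d}" by (rule set_eqI) auto
  have g: "((\<lambda>t. (t - d)^2 / t) has_real_derivative (1 - d^2/t^2)) (at t)" if "t \<ge> d" for t
  proof -
    have "t \<noteq> 0" using that d by auto
    have p: "((\<lambda>t. (t - d)^2) has_real_derivative 2 * (t - d)) (at t)"
      using DERIV_power[OF DERIV_diff[OF DERIV_ident DERIV_const], where n=2] by simp
    have "((\<lambda>t. (t - d)^2 / t) has_real_derivative ((2 * (t - d)) * t - 1 * (t - d)^2) / (t ^ Suc (Suc 0))) (at t)"
      using DERIV_quotient[OF p DERIV_ident] \<open>t \<noteq> 0\<close> by simp
    moreover have "((2 * (t - d)) * t - 1 * (t - d)^2) / (t ^ Suc (Suc 0)) = 1 - d^2/t^2"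
      using \<open>t \<noteq> 0\<close> by (simp add: field_simps power2_eq_square)
    ultimately show ?thesis by simp
  qed
  have "((\<lambda>x. if x \<in> {..d} then 0 else (x - d)^2 / x) has_vector_derivative
      (if t \<in> {..d} then 0 else 1 - d^2/t^2)) (at t within ({..d} \<union> {d<..}))"
  proof (rule has_vector_derivative_If_within_closures[where f' = "\<lambda>_. 0" and g' = "\<lambda>t. 1 - d^2/t^2"])
    show "t \<in> {..d} \<union> {d<..}" by auto
    show "((\<lambda>x. 0) has_vector_derivative 0) (at t within {..d} \<union> (closure {..d} \<inter> closure {d<..}))"
      by (rule has_vector_derivative_const)
    show "((\<lambda>x. (x - d)^2 / x) has_vector_derivative 1 - d^2/t^2) (at t within {d<..} \<union> (closure {..d} \<inter> closure {d<..}))"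
      if "t \<in> {d<..} \<union> (closure {..d} \<inter> closure {d<..})"
    proof -
      have "t \<ge> d" using that unfolding cl by auto
      have "((\<lambda>x. (x - d)^2 / x) has_real_derivative 1 - d^2/t^2) (at t within {d<..} \<union> (closure {..d} \<inter> closure {d<..}))"
        by (rule has_field_derivative_at_within[OF g[OF \<open>t \<ge> d\<close>]])
      then show ?thesis by (simp add: has_real_derivative_iff_has_vector_derivative)
    qed
    show "t \<in> closure {..d} \<Longrightarrow> t \<in> closure {d<..} \<Longrightarrow> 0 = (t - d)^2 / t" by auto
    show "t \<in> closure {..d} \<Longrightarrow> t \<in> closure {d<..} \<Longrightarrow> 0 = 1 - d^2/t^2" using d by auto
  qed simp
  moreover have "{..d} \<union> {d<..} = (UNIV :: real set)" by auto
  ultimately have "((\<lambda>x. if x \<in> {..d} then 0 else (x - d)^2 / x) has_real_derivative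
      (if t \<in> {..d} then 0 else 1 - d^2/t^2)) (at t)"
    by (simp add: has_real_derivative_iff_has_vector_derivative)
  then show ?thesis unfolding Gf_def[abs_def] Gd_def .
qed

lemma Gd_bounds: "d > 0 \<Longrightarrow> 0 \<le> Gd d t \<and> Gd d t \<le> 1"
  by (auto simp: Gd_def field_simps power2_eq_square intro: mult_mono)

lemma Gf_bounds: "d > 0 \<Longrightarrow> 0 \<le> Gf d t \<and> Gf d t \<le> max t 0 \<and> \<bar>Gf d t - max t 0\<bar> \<le> 2 * d"
proof -
  assume d: "d > 0"
  show ?thesis
  proof (cases "t \<le> d")
    case True then show ?thesis using d by (auto simp: Gf_def)
  next
    case False
    then have t: "t > d" "t > 0" using d by auto
    have e: "max t 0 - Gf d t = (2 * t * d - d^2) / t" using t False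
      by (simp add: Gf_def field_simps power2_eq_square)
    have "(2 * t * d - d^2) / t \<le> 2 * d" using t d by (simp add: field_simps power2_eq_square)
    moreover have "(2 * t * d - d^2) / t \<ge> 0" using t d by (simp add: field_simps power2_eq_square)
    moreover have "Gf d t \<ge> 0" using t False by (simp add: Gf_def)
    ultimately show ?thesis using e by auto
  qed
qed

lemma Gd_mono: "0 < d' \<Longrightarrow> d' \<le> d \<Longrightarrow> Gd d t \<le> Gd d' t"
proof -
  assume a: "0 < d'" "d' \<le> d"
  show ?thesis
  proof (cases "t \<le> d")
    case True then show ?thesis using Gd_bounds[of d' t] a by (simp add: Gd_def)
  next
    case False
    then have t: "t > 0" "t > d'" using a by auto
    have "d'^2 / t^2 \<le> d^2 / t^2" using a t by (intro divide_right_mono power_mono) auto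
    then show ?thesis using False t by (simp add: Gd_def)
  qed
qed

lemma Gd_cont: "d > 0 \<Longrightarrow> continuous_on UNIV (Gd d)"
proof -
  assume d: "d > 0"
  have "continuous_on ({..d} \<union> {d..}) (\<lambda>t. if t \<in> {..d} then 0 else 1 - d^2/t^2)"
  proof (rule continuous_on_cases)
    show "continuous_on {d..} (\<lambda>t. 1 - d^2/t^2)" using d by (intro continuous_intros) auto
  qed (use d in auto)
  moreover have "{..d} \<union> {d..} = (UNIV :: real set)" by auto
  ultimately show ?thesis by (simp add: Gd_def[abs_def])
qed

lemma Gf_cont: "d > 0 \<Longrightarrow> continuous_on UNIV (Gf d)"
  using G_deriv by (meson DERIV_continuous continuous_at_imp_continuous_on)

definition dk :: "nat \<Rightarrow> real" where "dk k = 1 / real (Suc k)"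

lemma dk_pos: "dk k > 0" by (simp add: dk_def)
lemma dk_lim: "dk \<longlonglongrightarrow> 0" unfolding dk_def by (rule LIMSEQ_Suc[OF lim_inverse_n'])
lemma dk_mono: "k \<le> k' \<Longrightarrow> dk k' \<le> dk k" by (simp add: dk_def frac_le)

lemma Gd_lim: "(\<lambda>k. Gd (dk k) t) \<longlonglongrightarrow> (if t > 0 then 1 else 0)"
proof (cases "t > 0")
  case False
  then have "Gd (dk k) t = 0" for k using dk_pos[of k] by (simp add: Gd_def)
  then show ?thesis using False by simp
next
  case True
  have ev: "\<forall>\<^sub>F k in sequentially. dk k < t" using dk_lim True by (rule order_tendstoD)
  have "(\<lambda>k. 1 - (dk k)^2 / t^2) \<longlonglongrightarrow> 1 - 0^2/t^2"
    by (intro tendsto_intros dk_lim) (use True in simp)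
  then have "(\<lambda>k. 1 - (dk k)^2 / t^2) \<longlonglongrightarrow> 1" by simp
  moreover have "\<forall>\<^sub>F k in sequentially. Gd (dk k) t = 1 - (dk k)^2 / t^2"
    using ev by eventually_elim (simp add: Gd_def)
  ultimately show ?thesis using True by (simp add: tendsto_cong)
qed

lemma Gf_lim: "(\<lambda>k. Gf (dk k) t) \<longlonglongrightarrow> max t 0"
proof -
  have "(\<lambda>k. Gf (dk k) t - max t 0) \<longlonglongrightarrow> 0"
  proof (rule tendsto_sandwich[where f = "\<lambda>k. - 2 * dk k" and h = "\<lambda>k. 2 * dk k"])
    show "\<forall>\<^sub>F n in sequentially. - 2 * dk n \<le> Gf (dk n) t - max t 0"
      using Gf_bounds[OF dk_pos] by (intro always_eventually allI) (smt (verit))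
    show "\<forall>\<^sub>F n in sequentially. Gf (dk n) t - max t 0 \<le> 2 * dk n"
      using Gf_bounds[OF dk_pos] by (intro always_eventually allI) (smt (verit))
    show "(\<lambda>k. - 2 * dk k) \<longlonglongrightarrow> 0" using tendsto_mult_right_zero[OF dk_lim, of "-2"] by simp
    show "(\<lambda>k. 2 * dk k) \<longlonglongrightarrow> 0" using tendsto_mult_right_zero[OF dk_lim, of "2"] by simp
  qed
  then show ?thesis by (simp add: LIM_zero_iff)
qed


definition ext :: "(real^'n) set \<Rightarrow> (real^'n \<Rightarrow> 'b::zero) \<Rightarrow> real^'n \<Rightarrow> 'b" where
  "ext S h x = (if x \<in> S then h x else 0)"

lemma lined_ext:
  assumes "open S" "y \<in> S" "lined h i y D"
  shows "lined (ext S h) i y D"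
proof -
  have op0: "open ((\<lambda>t::real. y + t *\<^sub>R axis i 1) -` S)"
    using assms(1) by (intro open_vimage continuous_intros) auto
  show ?thesis using assms(3) unfolding lined_def
    by (rule has_field_derivative_transform_within_open[OF _ op0]) (use assms(2) in \<open>auto simp: ext_def\<close>)
qed

lemma cont_ext:
  assumes "open S" "compact K" "K \<subseteq> S" "continuous_on S h" "\<And>x. x \<in> S \<Longrightarrow> x \<notin> K \<Longrightarrow> h x = 0"
  shows "continuous_on UNIV (ext S h)"
proof -
  have "continuous_on (S \<union> (- K)) (ext S h)"
  proof (rule continuous_on_open_Un)
    show "continuous_on S (ext S h)" using assms(4) by (rule continuous_on_eq) (simp add: ext_def)
    show "continuous_on (- K) (ext S h)"
      by (rule continuous_on_eq[OF continuous_on_const[of _ 0]]) (use assms(5) in \<open>auto simp: ext_def\<close>)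
  qed (use assms compact_imp_closed in auto)
  moreover have "S \<union> (- K) = UNIV" using assms(3) by auto
  ultimately show ?thesis by simp
qed

lemma borel_ext:
  fixes h :: "real^'n \<Rightarrow> 'b::{real_normed_vector,second_countable_topology}"
  assumes "open S" "continuous_on S h"
  shows "ext S h \<in> borel_measurable borel"
  unfolding ext_def[abs_def]
  by (rule borel_measurable_continuous_on_if) (use assms in auto)

lemma norm_sq_vec: "(norm (v::real^'n))^2 = (\<Sum>i\<in>UNIV. (v$i)^2)"
  by (simp add: norm_vec_def L2_set_def sum_nonneg)


lemma NNconv:
  fixes h :: "nat \<Rightarrow> real^'n \<Rightarrow> real"
  assumes hm: "\<And>k. h k \<in> borel_measurable borel" and h0: "\<And>k x. 0 \<le> h k x"
    and hH: "\<And>k x. h k x \<le> H x" and Hi: "integrable lborel H" and hl: "\<And>x. (\<lambda>k. h k x) \<longlonglongrightarrow> 0"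
  shows "(\<lambda>k. \<integral>\<^sup>+ x. ennreal (h k x) \<partial>lebesgue) \<longlonglongrightarrow> 0"
proof -
  have m0: "(\<lambda>x::real^'n. 0::real) \<in> borel_measurable lborel" by simp
  have hm': "h k \<in> borel_measurable lborel" for k using hm[of k] by simp
  have ae: "AE x in lborel. (\<lambda>k. h k x) \<longlonglongrightarrow> 0" using hl by simp
  have bd: "AE x in lborel. norm (h k x) \<le> H x" for k
    using h0 hH by (intro AE_I2) simp
  have hi: "integrable lborel (h k)" for k
    by (rule integrable_dominated_convergence2[OF m0 hm' Hi ae bd])
  have "(\<lambda>k. integral\<^sup>L lborel (h k)) \<longlonglongrightarrow> integral\<^sup>L lborel (\<lambda>x::real^'n. 0::real)"
    by (rule Bochner_Integration.integral_dominated_convergence[OF m0 hm' Hi ae bd])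
  then have "(\<lambda>k. ennreal (integral\<^sup>L lborel (h k))) \<longlonglongrightarrow> ennreal 0"
    by (intro tendsto_ennrealI) simp
  moreover have "(\<integral>\<^sup>+ x. ennreal (h k x) \<partial>lebesgue) = ennreal (integral\<^sup>L lborel (h k))" for k
    by (simp add: nn_integral_completion nn_integral_eq_integral[OF hi] h0)
  ultimately show ?thesis by simp
qed

lemma borel_to_lebesgue:
  assumes "f \<in> borel_measurable borel" shows "f \<in> borel_measurable lebesgue"
proof (rule measurable_completion)
  show "f \<in> borel_measurable lborel" using assms by (simp only: measurable_lborel2)
qed

locale setting =
  fixes \<Omega> :: "(real^'n) set" and w :: "real^'n \<Rightarrow> real" and Dw Dii :: "'n \<Rightarrow> real^'n \<Rightarrow> real"
    and a :: "real^'n \<Rightarrow> real" and A :: real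
  assumes op: "open \<Omega>" and bd: "bounded \<Omega>"
    and wc: "continuous_on (closure \<Omega>) w" and wfr: "\<And>x. x \<in> frontier \<Omega> \<Longrightarrow> w x = 0"
    and Lw: "\<And>i y. y \<in> \<Omega> \<Longrightarrow> lined w i y (Dw i y)" and Dwc: "\<And>i. continuous_on \<Omega> (Dw i)"
    and Lii: "\<And>i y. y \<in> \<Omega> \<Longrightarrow> lined (Dw i) i y (Dii i y)" and Diic: "\<And>i. continuous_on \<Omega> (Dii i)"
    and ineq: "\<And>y. y \<in> \<Omega> \<Longrightarrow> - (\<Sum>i\<in>UNIV. Dii i y) \<le> a y * w y"
    and ac: "continuous_on \<Omega> a" and aA: "\<And>y. y \<in> \<Omega> \<Longrightarrow> \<bar>a y\<bar> \<le> A"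
begin

definition K :: "real \<Rightarrow> (real^'n) set" where "K d = {x \<in> closure \<Omega>. w x \<ge> d}"
definition N :: "real^'n \<Rightarrow> real" where "N x = (\<Sum>i\<in>UNIV. (Dw i x)^2)"

lemma wcO: "continuous_on \<Omega> w" using wc closure_subset continuous_on_subset by blast

lemma K_compact: "compact (K d)"
proof -
  have "closed (closure \<Omega> \<inter> w -` {d..})" by (rule continuous_closed_preimage[OF wc]) auto
  moreover have "K d = closure \<Omega> \<inter> w -` {d..}" by (auto simp: K_def)
  moreover have "bounded (K d)" using bd by (rule bounded_subset[OF bounded_closure]) (auto simp: K_def)
  ultimately show ?thesis using compact_eq_bounded_closed by auto
qed

lemma K_sub: "d > 0 \<Longrightarrow> K d \<subseteq> \<Omega>"
proof
  fix x assume d: "d > 0" and x: "x \<in> K d"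
  show "x \<in> \<Omega>"
  proof (rule ccontr)
    assume "x \<notin> \<Omega>"
    then have "x \<in> frontier \<Omega>" using x op by (auto simp: K_def frontier_def interior_open)
    then show False using wfr x d by (auto simp: K_def)
  qed
qed

lemma notK: "x \<in> \<Omega> \<Longrightarrow> x \<notin> K d \<Longrightarrow> w x < d"
  using closure_subset by (force simp: K_def)

lemma Gf_van: "d > 0 \<Longrightarrow> x \<in> \<Omega> \<Longrightarrow> x \<notin> K d \<Longrightarrow> Gf d (w x) = 0"
  using notK[of x d] by (auto simp: Gf_def)
lemma Gd_van: "d > 0 \<Longrightarrow> x \<in> \<Omega> \<Longrightarrow> x \<notin> K d \<Longrightarrow> Gd d (w x) = 0"
  using notK[of x d] by (auto simp: Gd_def)

lemma lined_Gw:
  assumes "d > 0" "y \<in> \<Omega>"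
  shows "lined (\<lambda>x. Gf d (w x)) i y (Gd d (w y) * Dw i y)"
proof -
  have w0: "((\<lambda>t. w (y + t *\<^sub>R axis i 1)) has_real_derivative Dw i y) (at 0)"
    using Lw[OF assms(2), of i] unfolding lined_def .
  have "((\<lambda>t. Gf d (w (y + t *\<^sub>R axis i 1))) has_real_derivative Gd d (w (y + 0 *\<^sub>R axis i 1)) * Dw i y) (at 0)"
    by (rule DERIV_chain2[OF G_deriv[OF assms(1), of "w (y + 0 *\<^sub>R axis i 1)"] w0])
  then show ?thesis unfolding lined_def by simp
qed

lemma lined_GwD:
  assumes "d > 0" "y \<in> \<Omega>"
  shows "lined (\<lambda>x. Gf d (w x) * Dw i x) i y (Gd d (w y) * Dw i y * Dw i y + Gf d (w y) * Dii i y)"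
  using DERIV_mult[OF lined_Gw[OF assms, of i, unfolded lined_def] Lii[OF assms(2), of i, unfolded lined_def]]
  unfolding lined_def by (simp add: algebra_simps)

lemma GwD_cont: "d > 0 \<Longrightarrow> continuous_on \<Omega> (\<lambda>x. Gf d (w x))"
  by (rule continuous_on_compose2[OF Gf_cont wcO]) auto
lemma GdwD_cont: "d > 0 \<Longrightarrow> continuous_on \<Omega> (\<lambda>x. Gd d (w x))"
  by (rule continuous_on_compose2[OF Gd_cont wcO]) auto

lemma IBP:
  assumes d: "d > 0"
  shows "integral\<^sup>L lborel (ext \<Omega> (\<lambda>x. Gd d (w x) * N x))
       = integral\<^sup>L lborel (ext \<Omega> (\<lambda>x. - (\<Sum>i\<in>UNIV. Dii i x) * Gf d (w x)))"
proof -
  let ?K = "K d"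
  have Kc: "compact ?K" and KS: "?K \<subseteq> \<Omega>" using K_compact K_sub d by auto
  define F where "F i = ext \<Omega> (\<lambda>x. Gf d (w x) * Dw i x)" for i
  define D where "D i = ext \<Omega> (\<lambda>x. Gd d (w x) * Dw i x * Dw i x + Gf d (w x) * Dii i x)" for i
  have Dcont: "continuous_on UNIV (D i)" for i
    unfolding D_def
    by (rule cont_ext[OF op Kc KS])
       (use d Gf_van Gd_van in \<open>auto intro!: continuous_intros GwD_cont GdwD_cont Dwc Diic\<close>)
  have Fcont: "continuous_on UNIV (F i)" for i
    unfolding F_def
    by (rule cont_ext[OF op Kc KS])
       (use d Gf_van Gd_van in \<open>auto intro!: continuous_intros GwD_cont GdwD_cont Dwc Diic\<close>)
  have F0: "F i y = 0" if "y \<notin> ?K" for i y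
    using that d Gf_van by (auto simp: F_def ext_def)
  have LF: "lined (F i) i y (D i y)" for i y
  proof (cases "y \<in> \<Omega>")
    case True
    then show ?thesis unfolding F_def D_def
      using lined_ext[OF op True lined_GwD[OF d True]] True by (simp add: ext_def)
  next
    case False
    then have "y \<notin> ?K" using KS by auto
    then have "lined (F i) i y 0" by (rule lined_zero_outside[OF compact_imp_closed[OF Kc]]) (rule F0)
    then show ?thesis using False by (simp add: D_def ext_def)
  qed
  have D0: "integral\<^sup>L lborel (D i) = 0" for i
    by (rule KL[OF Fcont Dcont Kc F0 LF])
  have Dint: "integrable lborel (D i)" for i
    by (rule integrable_cont_compact[OF Dcont Kc]) (use d Gf_van Gd_van in \<open>auto simp: D_def ext_def\<close>)
  have "integral\<^sup>L lborel (\<lambda>x. \<Sum>i\<in>UNIV. D i x) = (\<Sum>i\<in>UNIV. integral\<^sup>L lborel (D i))"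
    by (rule Bochner_Integration.integral_sum) (rule Dint)
  then have "integral\<^sup>L lborel (\<lambda>x. \<Sum>i\<in>UNIV. D i x) = 0" using D0 by simp
  moreover have "(\<lambda>x. \<Sum>i\<in>UNIV. D i x) = (\<lambda>x. ext \<Omega> (\<lambda>x. Gd d (w x) * N x) x - ext \<Omega> (\<lambda>x. - (\<Sum>i\<in>UNIV. Dii i x) * Gf d (w x)) x)"
    by (auto simp: D_def ext_def N_def sum.distrib sum_distrib_left sum_distrib_right power2_eq_square algebra_simps)
  moreover have i1: "integrable lborel (ext \<Omega> (\<lambda>x. Gd d (w x) * N x))"
    by (rule integrable_cont_compact[OF cont_ext[OF op Kc KS] Kc])
       (use d Gf_van Gd_van in \<open>auto intro!: continuous_intros GwD_cont GdwD_cont Dwc Diic simp: ext_def N_def\<close>)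
  moreover have i2: "integrable lborel (ext \<Omega> (\<lambda>x. - (\<Sum>i\<in>UNIV. Dii i x) * Gf d (w x)))"
    by (rule integrable_cont_compact[OF cont_ext[OF op Kc KS] Kc])
       (use d Gf_van Gd_van in \<open>auto intro!: continuous_intros GwD_cont GdwD_cont Dwc Diic simp: ext_def N_def\<close>)
  ultimately show ?thesis by simp
qed


lemma cont_K: "d > 0 \<Longrightarrow> continuous_on \<Omega> h \<Longrightarrow> (\<And>x. x \<in> \<Omega> \<Longrightarrow> x \<notin> K d \<Longrightarrow> h x = 0) \<Longrightarrow> continuous_on UNIV (ext \<Omega> h)"
  by (rule cont_ext[OF op K_compact K_sub])

lemma int_K: "d > 0 \<Longrightarrow> continuous_on \<Omega> h \<Longrightarrow> (\<And>x. x \<in> \<Omega> \<Longrightarrow> x \<notin> K d \<Longrightarrow> h x = 0) \<Longrightarrow> integrable lborel (ext \<Omega> (h :: _ \<Rightarrow> real))"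
  by (rule integrable_cont_compact[OF cont_K K_compact]) (auto simp: ext_def)

definition P :: "(real^'n) set" where "P = {x \<in> \<Omega>. 0 < w x}"
definition Uf :: "real^'n \<Rightarrow> real" where "Uf x = (if x \<in> P then N x else 0)"
definition phi :: "real^'n \<Rightarrow> real" where "phi = ext \<Omega> (\<lambda>x. max (w x) 0)"
definition gg :: "real^'n \<Rightarrow> real^'n" where "gg x = (if x \<in> P then (\<chi> i. Dw i x) else 0)"
definition psi :: "nat \<Rightarrow> real^'n \<Rightarrow> real" where "psi k = ext \<Omega> (\<lambda>x. Gf (dk k) (w x))"
definition I :: "nat \<Rightarrow> real" where "I k = integral\<^sup>L lborel (ext \<Omega> (\<lambda>x. Gd (dk k) (w x) * N x))"
definition J :: "nat \<Rightarrow> real" where "J k = integral\<^sup>L lborel (ext \<Omega> (\<lambda>x. a x * w x * Gf (dk k) (w x)))"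
definition Jl :: real where "Jl = integral\<^sup>L lborel (ext \<Omega> (\<lambda>x. a x * (max (w x) 0)^2))"

lemma P_open: "open P"
proof -
  have "open (\<Omega> \<inter> w -` {0<..})" by (rule continuous_open_preimage[OF wcO op]) auto
  moreover have "P = \<Omega> \<inter> w -` {0<..}" by (auto simp: P_def)
  ultimately show ?thesis by simp
qed

lemma P_sub: "P \<subseteq> \<Omega>" by (auto simp: P_def)

lemma N_nonneg: "N x \<ge> 0" by (simp add: N_def sum_nonneg)

lemma NcO: "continuous_on \<Omega> N" unfolding N_def[abs_def] by (intro continuous_intros Dwc)

lemma Nint_k: "integrable lborel (ext \<Omega> (\<lambda>x. Gd (dk k) (w x) * N x))"
  using dk_pos[of k] by (intro int_K[of "dk k"]) (auto intro!: continuous_intros GdwD_cont NcO simp: Gd_van)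

lemma Jint_k: "integrable lborel (ext \<Omega> (\<lambda>x. a x * w x * Gf (dk k) (w x)))"
  using dk_pos[of k] by (intro int_K[of "dk k"]) (auto intro!: continuous_intros GwD_cont ac wcO simp: Gf_van)

lemma IleJ: "I k \<le> J k"
proof -
  have d: "dk k > 0" by (rule dk_pos)
  have "I k = integral\<^sup>L lborel (ext \<Omega> (\<lambda>x. - (\<Sum>i\<in>UNIV. Dii i x) * Gf (dk k) (w x)))"
    unfolding I_def by (rule IBP[OF d])
  also have "\<dots> \<le> J k" unfolding J_def
  proof (rule integral_mono)
    show "integrable lborel (ext \<Omega> (\<lambda>x. - (\<Sum>i\<in>UNIV. Dii i x) * Gf (dk k) (w x)))"
      using d by (intro int_K[of "dk k"]) (auto intro!: continuous_intros GwD_cont Diic simp: Gf_van)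
    show "integrable lborel (ext \<Omega> (\<lambda>x. a x * w x * Gf (dk k) (w x)))" by (rule Jint_k)
    fix x
    show "ext \<Omega> (\<lambda>x. - (\<Sum>i\<in>UNIV. Dii i x) * Gf (dk k) (w x)) x \<le> ext \<Omega> (\<lambda>x. a x * w x * Gf (dk k) (w x)) x"
    proof (cases "x \<in> \<Omega>")
      case True
      have "- (\<Sum>i\<in>UNIV. Dii i x) * Gf (dk k) (w x) \<le> a x * w x * Gf (dk k) (w x)"
        using ineq[OF True] Gf_bounds[OF d, of "w x"] by (intro mult_right_mono) auto
      then show ?thesis using True by (simp add: ext_def)
    qed (simp add: ext_def)
  qed
  finally show ?thesis .
qed

lemma W_bound: obtains W where "\<And>x. x \<in> \<Omega> \<Longrightarrow> \<bar>w x\<bar> \<le> W"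
proof -
  have "compact (w ` closure \<Omega>)" using bd wc by (intro compact_continuous_image) auto
  then have "bounded (w ` closure \<Omega>)" by (rule compact_imp_bounded)
  then obtain W where "\<forall>y\<in>w ` closure \<Omega>. norm y \<le> W" by (auto simp: bounded_iff)
  then have W: "\<And>x. x \<in> closure \<Omega> \<Longrightarrow> \<bar>w x\<bar> \<le> W" by auto
  show ?thesis by (rule that[of W]) (use W closure_subset in auto)
qed

lemma Omega_meas: "\<Omega> \<in> sets lborel" using op by simp
lemma Omega_fin: "emeasure lborel \<Omega> < \<infinity>" by (rule emeasure_bounded_finite[OF bd])

lemma J_lim: "J \<longlonglongrightarrow> Jl"
proof -
  obtain W where W: "\<And>x. x \<in> \<Omega> \<Longrightarrow> \<bar>w x\<bar> \<le> W" using W_bound by metis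
  show ?thesis unfolding J_def[abs_def] Jl_def
  proof (rule integral_dominated_convergence[where w = "\<lambda>x. A * W^2 * indicator \<Omega> x"])
    show "ext \<Omega> (\<lambda>x. a x * (max (w x) 0)\<^sup>2) \<in> borel_measurable lborel"
    proof -
      have "continuous_on \<Omega> (\<lambda>x. a x * (max (w x) 0)\<^sup>2)" by (intro continuous_intros ac wcO)
      then show ?thesis using borel_ext[OF op, of "\<lambda>x. a x * (max (w x) 0)\<^sup>2"] by simp
    qed
    show "ext \<Omega> (\<lambda>x. a x * w x * Gf (dk k) (w x)) \<in> borel_measurable lborel" for k
      using Jint_k[of k] by auto
    show "integrable lborel (\<lambda>x. A * W\<^sup>2 * indicator \<Omega> x)"
      using Omega_meas Omega_fin by (intro integrable_mult_right integrable_real_indicator) auto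
    show "AE x in lborel. (\<lambda>k. ext \<Omega> (\<lambda>x. a x * w x * Gf (dk k) (w x)) x) \<longlonglongrightarrow> ext \<Omega> (\<lambda>x. a x * (max (w x) 0)\<^sup>2) x"
    proof (intro AE_I2)
      fix x
      have "(\<lambda>k. a x * w x * Gf (dk k) (w x)) \<longlonglongrightarrow> a x * w x * max (w x) 0"
        by (intro tendsto_intros Gf_lim)
      moreover have "a x * w x * max (w x) 0 = a x * (max (w x) 0)\<^sup>2"
        by (simp add: max_def power2_eq_square)
      ultimately show "(\<lambda>k. ext \<Omega> (\<lambda>x. a x * w x * Gf (dk k) (w x)) x) \<longlonglongrightarrow> ext \<Omega> (\<lambda>x. a x * (max (w x) 0)\<^sup>2) x"
        by (simp add: ext_def)
    qed
    show "AE x in lborel. norm (ext \<Omega> (\<lambda>x. a x * w x * Gf (dk k) (w x)) x) \<le> A * W\<^sup>2 * indicator \<Omega> x" for k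
    proof (intro AE_I2)
      fix x
      show "norm (ext \<Omega> (\<lambda>x. a x * w x * Gf (dk k) (w x)) x) \<le> A * W\<^sup>2 * indicator \<Omega> x"
      proof (cases "x \<in> \<Omega>")
        case True
        have g: "0 \<le> Gf (dk k) (w x)" "Gf (dk k) (w x) \<le> \<bar>w x\<bar>"
          using Gf_bounds[OF dk_pos, of k "w x"] by auto
        have "\<bar>a x * w x * Gf (dk k) (w x)\<bar> = \<bar>a x\<bar> * (\<bar>w x\<bar> * Gf (dk k) (w x))"
          using g by (simp add: abs_mult)
        also have "\<dots> \<le> A * (W * W)"
          using aA[OF True] W[OF True] g
          by (intro mult_mono) (auto intro: mult_mono order.trans[OF abs_ge_zero])
        finally show ?thesis using True by (simp add: ext_def power2_eq_square)
      qed (simp add: ext_def)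
    qed
  qed
qed

lemma I_mono: "k \<le> k' \<Longrightarrow> I k \<le> I k'"
  unfolding I_def
  by (intro integral_mono Nint_k)
     (auto simp: ext_def intro!: mult_right_mono Gd_mono dk_pos dk_mono N_nonneg)

lemma I_nonneg: "I k \<ge> 0"
  unfolding I_def
  using Gd_bounds[OF dk_pos] N_nonneg by (intro Bochner_Integration.integral_nonneg) (auto simp: ext_def)

lemma I_conv: "convergent I"
proof (rule Bseq_mono_convergent)
  obtain B where B: "\<And>k. \<bar>J k\<bar> \<le> B"
    using convergent_imp_Bseq[of J] J_lim unfolding convergent_def Bseq_def by (auto simp: less_imp_le)
  show "Bseq I"
  proof (rule BseqI'[of _ B])
    fix k
    have "I k \<le> B" using IleJ[of k] B[of k] by linarith
    then show "norm (I k) \<le> B" using I_nonneg[of k] by simp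
  qed
  show "\<forall>m n. m \<le> n \<longrightarrow> I m \<le> I n" using I_mono by auto
qed

definition Il :: real where "Il = lim I"

lemma I_lim: "I \<longlonglongrightarrow> Il" unfolding Il_def using I_conv by (simp add: convergent_LIMSEQ_iff)

lemma Il_le: "Il \<le> Jl"
  by (rule LIMSEQ_le[OF I_lim J_lim]) (use IleJ in auto)

lemma Uf_borel: "Uf \<in> borel_measurable borel"
  unfolding Uf_def[abs_def]
  by (rule borel_measurable_continuous_on_if) (use P_open NcO P_sub continuous_on_subset in auto)

lemma Uf_int: "integrable lborel Uf" and Uf_integral: "integral\<^sup>L lborel Uf = Il"
proof -
  have lim: "AE x in lborel. (\<lambda>k. ext \<Omega> (\<lambda>x. Gd (dk k) (w x) * N x) x) \<longlonglongrightarrow> Uf x"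
  proof (intro AE_I2)
    fix x
    have "(\<lambda>k. Gd (dk k) (w x) * N x) \<longlonglongrightarrow> (if w x > 0 then 1 else 0) * N x"
      by (intro tendsto_intros Gd_lim)
    then show "(\<lambda>k. ext \<Omega> (\<lambda>x. Gd (dk k) (w x) * N x) x) \<longlonglongrightarrow> Uf x"
      by (cases "x \<in> \<Omega>") (auto simp: ext_def Uf_def P_def split: if_splits)
  qed
  have mono: "AE x in lborel. mono (\<lambda>k. ext \<Omega> (\<lambda>x. Gd (dk k) (w x) * N x) x)"
    by (intro AE_I2 monoI) (auto simp: ext_def intro!: mult_right_mono Gd_mono dk_pos dk_mono N_nonneg)
  have pos: "AE x in lborel. 0 \<le> ext \<Omega> (\<lambda>x. Gd (dk k) (w x) * N x) x" for k
    using Gd_bounds[OF dk_pos] N_nonneg by (intro AE_I2) (auto simp: ext_def)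
  have ilim: "(\<lambda>k. integral\<^sup>L lborel (ext \<Omega> (\<lambda>x. Gd (dk k) (w x) * N x))) \<longlonglongrightarrow> Il"
    using I_lim unfolding I_def[abs_def] .
  show "integrable lborel Uf" 
    by (rule integral_monotone_convergence_nonneg(1)[OF Nint_k mono pos lim ilim]) (use Uf_borel in simp)
  show "integral\<^sup>L lborel Uf = Il"
    by (rule integral_monotone_convergence_nonneg(2)[OF Nint_k mono pos lim ilim]) (use Uf_borel in simp)
qed


lemma lined_psi: "lined (psi k) i y (ext \<Omega> (\<lambda>x. Gd (dk k) (w x) * Dw i x) y)"
proof (cases "y \<in> \<Omega>")
  case True
  then show ?thesis unfolding psi_def
    using lined_ext[OF op True lined_Gw[OF dk_pos True]] by (simp add: ext_def)
next
  case False
  then have "y \<notin> K (dk k)" using K_sub[OF dk_pos] by auto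
  then have "lined (psi k) i y 0"
    by (rule lined_zero_outside[OF compact_imp_closed[OF K_compact]])
       (use Gf_van[OF dk_pos] in \<open>auto simp: psi_def ext_def\<close>)
  then show ?thesis using False by (simp add: ext_def)
qed

lemma partial_psi: "partial (psi k) i = ext \<Omega> (\<lambda>x. Gd (dk k) (w x) * Dw i x)"
  using lined_partial[OF lined_psi] by auto

lemma psi_cont: "continuous_on UNIV (psi k)"
  unfolding psi_def using dk_pos[of k]
  by (intro cont_K[of "dk k"]) (auto intro!: GwD_cont simp: Gf_van)

lemma psi_diff: "psi k differentiable (at x)"
proof (cases "x \<in> \<Omega>")
  case True
  have wd: "(w has_derivative (\<lambda>h. \<Sum>i\<in>UNIV. h$i * Dw i x)) (at x)"
    by (rule PD[OF op True Lw Dwc])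
  have "w differentiable (at x)" by (rule differentiableI[OF wd])
  moreover have "Gf (dk k) differentiable (at (w x))"
    using G_deriv[OF dk_pos] unfolding has_field_derivative_def by (rule differentiableI)
  ultimately have "(Gf (dk k) \<circ> w) differentiable (at x)" by (rule differentiable_chain_at)
  then obtain D where "((Gf (dk k) \<circ> w) has_derivative D) (at x)" unfolding differentiable_def by blast
  then have "(psi k has_derivative D) (at x)"
    by (rule has_derivative_transform_within_open[OF _ op True]) (simp add: psi_def ext_def)
  then show ?thesis by (rule differentiableI)
next
  case False
  then have x: "x \<notin> K (dk k)" using K_sub[OF dk_pos] by auto
  have "((\<lambda>_. 0::real) has_derivative (\<lambda>_. 0)) (at x)" by simp
  then have "(psi k has_derivative (\<lambda>_. 0)) (at x)"
    by (rule has_derivative_transform_within_open[where s = "- K (dk k)"])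
       (use x K_compact compact_imp_closed Gf_van[OF dk_pos] in \<open>auto simp: psi_def ext_def\<close>)
  then show ?thesis by (rule differentiableI)
qed

lemma psi_Cc1: "Cc1 \<Omega> (psi k)"
  unfolding Cc1_def
proof (intro conjI allI)
  show "psi k differentiable (at x)" for x by (rule psi_diff)
  show "continuous_on UNIV (partial (psi k) i)" for i
    unfolding partial_psi using dk_pos[of k]
    by (intro cont_K[of "dk k"]) (auto intro!: continuous_intros GdwD_cont Dwc simp: Gd_van)
  have sub: "{x. psi k x \<noteq> 0} \<subseteq> K (dk k)"
    using Gf_van[OF dk_pos] by (auto simp: psi_def ext_def)
  then have csub: "closure {x. psi k x \<noteq> 0} \<subseteq> K (dk k)"
    by (rule closure_minimal) (rule compact_imp_closed[OF K_compact])
  show "compact (closure {x. psi k x \<noteq> 0})"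
    using sub compact_imp_bounded[OF K_compact] bounded_subset by (simp add: compact_closure) blast
  show "closure {x. psi k x \<noteq> 0} \<subseteq> \<Omega>" using csub K_sub[OF dk_pos] by auto
qed

lemma phi_borel: "phi \<in> borel_measurable borel"
  unfolding phi_def by (rule borel_ext[OF op]) (intro continuous_intros wcO)

lemma gg_borel: "gg \<in> borel_measurable borel"
  unfolding gg_def[abs_def]
proof (rule borel_measurable_continuous_on_if)
  show "continuous_on P (\<lambda>x. \<chi> i. Dw i x)"
    by (intro continuous_on_vec_lambda continuous_on_subset[OF Dwc] P_sub)
qed (use P_open in auto)

lemma grad_psi: "grad (psi k) x = (\<chi> i. ext \<Omega> (\<lambda>x. Gd (dk k) (w x) * Dw i x) x)"
  unfolding grad_def partial_psi by simp

lemma hk_eq: "(norm (grad (psi k) x - gg x))^2 = (if x \<in> P then (Gd (dk k) (w x) - 1)^2 * N x else 0)"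
proof (cases "x \<in> P")
  case True
  then have "x \<in> \<Omega>" using P_sub by auto
  then have "grad (psi k) x - gg x = (\<chi> i. (Gd (dk k) (w x) - 1) * Dw i x)"
    using True by (simp add: grad_psi gg_def ext_def vec_eq_iff algebra_simps)
  then show ?thesis using True
    by (simp add: norm_sq_vec N_def power_mult_distrib sum_distrib_left)
next
  case False
  have "grad (psi k) x - gg x = 0"
  proof (cases "x \<in> \<Omega>")
    case True
    then have "w x \<le> 0" using False by (auto simp: P_def)
    then have "Gd (dk k) (w x) = 0" using dk_pos[of k] by (simp add: Gd_def)
    then show ?thesis using False True by (simp add: grad_psi gg_def ext_def vec_eq_iff)
  qed (use False P_sub in \<open>auto simp: grad_psi gg_def ext_def vec_eq_iff\<close>)
  then show ?thesis using False by simp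
qed

lemma H10_phi: "H10 \<Omega> phi gg"
  unfolding H10_def
proof (intro conjI exI[of _ psi] allI)
  show "phi \<in> borel_measurable lebesgue" by (rule borel_to_lebesgue[OF phi_borel])
  show "gg \<in> borel_measurable lebesgue" by (rule borel_to_lebesgue[OF gg_borel])
  show "Cc1 \<Omega> (psi k)" for k by (rule psi_Cc1)
  have e1: "(\<integral>\<^sup>+ x. indicator \<Omega> x * ennreal ((psi k x - phi x)\<^sup>2) \<partial>lebesgue)
      = (\<integral>\<^sup>+ x. ennreal ((psi k x - phi x)\<^sup>2) \<partial>lebesgue)" for k
    by (intro nn_integral_cong) (auto simp: indicator_def psi_def phi_def ext_def)
  have "(\<lambda>k. \<integral>\<^sup>+ x. ennreal ((psi k x - phi x)\<^sup>2) \<partial>lebesgue) \<longlonglongrightarrow> 0"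
  proof (rule NNconv[where H = "\<lambda>x. 4 * indicator \<Omega> x"])
    show "(\<lambda>x. (psi k x - phi x)\<^sup>2) \<in> borel_measurable borel" for k
      using borel_measurable_continuous_onI[OF psi_cont[of k]] phi_borel by measurable
    show "integrable lborel (\<lambda>x. 4 * indicator \<Omega> x :: real)"
      using Omega_meas Omega_fin by (intro integrable_mult_right integrable_real_indicator) auto
    show "(psi k x - phi x)\<^sup>2 \<le> 4 * indicator \<Omega> x" for k x
    proof (cases "x \<in> \<Omega>")
      case True
      have "\<bar>Gf (dk k) (w x) - max (w x) 0\<bar> \<le> 2 * dk k" using Gf_bounds[OF dk_pos] by blast
      moreover have "dk k \<le> 1" by (simp add: dk_def)
      ultimately have "\<bar>psi k x - phi x\<bar> \<le> 2" using True by (simp add: psi_def phi_def ext_def)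
      then have "(psi k x - phi x)\<^sup>2 \<le> 2^2" by (metis abs_le_square_iff abs_numeral)
      then show ?thesis using True by simp
    qed (simp add: psi_def phi_def ext_def)
    show "(\<lambda>k. (psi k x - phi x)\<^sup>2) \<longlonglongrightarrow> 0" for x
    proof (cases "x \<in> \<Omega>")
      case True
      have "(\<lambda>k. (Gf (dk k) (w x) - max (w x) 0)\<^sup>2) \<longlonglongrightarrow> (max (w x) 0 - max (w x) 0)\<^sup>2"
        by (intro tendsto_intros Gf_lim)
      then show ?thesis using True by (simp add: psi_def phi_def ext_def)
    qed (simp add: psi_def phi_def ext_def)
  qed simp
  then show "(\<lambda>k. \<integral>\<^sup>+ x. indicator \<Omega> x * ennreal ((psi k x - phi x)\<^sup>2) \<partial>lebesgue) \<longlonglongrightarrow> 0"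
    using e1 by simp
  have e2: "(\<integral>\<^sup>+ x. indicator \<Omega> x * ennreal ((norm (grad (psi k) x - gg x))\<^sup>2) \<partial>lebesgue)
      = (\<integral>\<^sup>+ x. ennreal (if x \<in> P then (Gd (dk k) (w x) - 1)^2 * N x else 0) \<partial>lebesgue)" for k
    by (intro nn_integral_cong) (use P_sub in \<open>auto simp: indicator_def hk_eq\<close>)
  have "(\<lambda>k. \<integral>\<^sup>+ x. ennreal (if x \<in> P then (Gd (dk k) (w x) - 1)^2 * N x else 0) \<partial>lebesgue) \<longlonglongrightarrow> 0"
  proof (rule NNconv[where H = Uf])
    show "(\<lambda>x. if x \<in> P then (Gd (dk k) (w x) - 1)^2 * N x else 0) \<in> borel_measurable borel" for k
    proof (rule borel_measurable_continuous_on_if)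
      show "continuous_on P (\<lambda>x. (Gd (dk k) (w x) - 1)^2 * N x)"
        using P_sub by (intro continuous_intros continuous_on_subset[OF GdwD_cont[OF dk_pos]] continuous_on_subset[OF NcO])
    qed (use P_open in auto)
    show "0 \<le> (if x \<in> P then (Gd (dk k) (w x) - 1)^2 * N x else 0)" for k x using N_nonneg by simp
    show "(if x \<in> P then (Gd (dk k) (w x) - 1)^2 * N x else 0) \<le> Uf x" for k x
    proof (cases "x \<in> P")
      case True
      have "(Gd (dk k) (w x) - 1)^2 \<le> 1" using Gd_bounds[OF dk_pos, of k "w x"]
        by (simp add: abs_le_square_iff[symmetric, of _ 1, simplified] abs_le_iff)
      then show ?thesis using True N_nonneg[of x] by (simp add: Uf_def mult_left_le_one_le)
    qed (simp add: Uf_def)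
    show "integrable lborel Uf" by (rule Uf_int)
    show "(\<lambda>k. if x \<in> P then (Gd (dk k) (w x) - 1)^2 * N x else 0) \<longlonglongrightarrow> 0" for x
    proof (cases "x \<in> P")
      case True
      then have "w x > 0" by (simp add: P_def)
      have "(\<lambda>k. (Gd (dk k) (w x) - 1)^2 * N x) \<longlonglongrightarrow> ((if w x > 0 then 1 else 0) - 1)^2 * N x"
        by (intro tendsto_intros Gd_lim)
      then show ?thesis using True \<open>w x > 0\<close> by simp
    qed simp
  qed
  then show "(\<lambda>k. \<integral>\<^sup>+ x. indicator \<Omega> x * ennreal ((norm (grad (psi k) x - gg x))\<^sup>2) \<partial>lebesgue) \<longlonglongrightarrow> 0"
    using e2 by simp
qed


lemma L1: "(LINT x:\<Omega>|lebesgue. (norm (gg x))^2) = Il"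
proof -
  have "(LINT x:\<Omega>|lebesgue. (norm (gg x))^2) = integral\<^sup>L lebesgue Uf"
    unfolding set_lebesgue_integral_def
  proof (rule Bochner_Integration.integral_cong[OF refl])
    fix x
    show "indicator \<Omega> x *\<^sub>R (norm (gg x))\<^sup>2 = Uf x"
      using P_sub by (auto simp: indicator_def Uf_def gg_def norm_sq_vec N_def)
  qed
  also have "\<dots> = integral\<^sup>L lborel Uf"
    by (rule integral_completion) (use Uf_borel in simp)
  finally show ?thesis using Uf_integral by simp
qed

lemma L2: "(LINT x:\<Omega>|lebesgue. a x * (phi x)^2) = Jl"
proof -
  have m: "ext \<Omega> (\<lambda>x. a x * (max (w x) 0)\<^sup>2) \<in> borel_measurable borel"
  proof -
    have "continuous_on \<Omega> (\<lambda>x. a x * (max (w x) 0)\<^sup>2)" by (intro continuous_intros ac wcO)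
    then show ?thesis using borel_ext[OF op, of "\<lambda>x. a x * (max (w x) 0)\<^sup>2"] by simp
  qed
  have "(LINT x:\<Omega>|lebesgue. a x * (phi x)^2) = integral\<^sup>L lebesgue (ext \<Omega> (\<lambda>x. a x * (max (w x) 0)\<^sup>2))"
    unfolding set_lebesgue_integral_def
  proof (rule Bochner_Integration.integral_cong[OF refl])
    fix x
    show "indicator \<Omega> x *\<^sub>R (a x * (phi x)\<^sup>2) = ext \<Omega> (\<lambda>x. a x * (max (w x) 0)\<^sup>2) x"
      by (auto simp: indicator_def phi_def ext_def)
  qed
  also have "\<dots> = Jl" unfolding Jl_def
    by (rule integral_completion) (use m in simp)
  finally show ?thesis .
qed

lemma w_nonpos:
  assumes stab: "\<And>\<phi> g. H10 \<Omega> \<phi> g \<Longrightarrow> \<not> (AE x in lebesgue. x \<in> \<Omega> \<longrightarrow> \<phi> x = 0) \<Longrightarrow>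
      (LINT x:\<Omega>|lebesgue. (norm (g x))^2) - (LINT x:\<Omega>|lebesgue. a x * (\<phi> x)^2) > 0"
    and x: "x \<in> \<Omega>"
  shows "w x \<le> 0"
proof (rule ccontr)
  assume "\<not> w x \<le> 0"
  then have xP: "x \<in> P" using x by (simp add: P_def)
  have AE: "AE y in lebesgue. y \<in> \<Omega> \<longrightarrow> phi y = 0"
  proof (rule ccontr)
    assume "\<not> (AE y in lebesgue. y \<in> \<Omega> \<longrightarrow> phi y = 0)"
    from stab[OF H10_phi this] show False using L1 L2 Il_le by linarith
  qed
  then have "AE y in lebesgue. y \<notin> P"
    by eventually_elim (auto simp: P_def phi_def ext_def)
  moreover have Pm: "P \<in> sets lebesgue"
    using P_open by (intro sets_completionI_sets) simp
  ultimately have "emeasure lebesgue P = 0"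
    by (subst (asm) AE_iff_measurable[OF Pm]) auto
  then have "P \<in> null_sets lebesgue" using Pm by (simp add: null_sets_def)
  then have "negligible P" by (simp add: negligible_iff_null_sets)
  moreover have "\<not> negligible P" by (rule open_not_negligible[OF P_open]) (use xP in auto)
  ultimately show False by simp
qed

end


lemma f_deriv:
  fixes f :: "real^'n \<Rightarrow> real \<Rightarrow> real"
  assumes D: "\<forall>p\<in>S \<times> UNIV. ((\<lambda>q. f (fst q) (snd q)) has_derivative Df p) (at p)" and x: "x \<in> S"
  shows "((\<lambda>s. f x s) has_real_derivative Df (x,t) (0,1)) (at t)"
proof -
  have p: "((\<lambda>s::real. (x, s)) has_derivative (\<lambda>h. (0, h))) (at t)"
    by (rule has_derivative_Pair[OF has_derivative_const has_derivative_ident])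
  have q: "((\<lambda>q. f (fst q) (snd q)) has_derivative Df (x,t)) (at (x,t))" using D x by auto
  have c: "((\<lambda>s. f x s) has_derivative (\<lambda>h. Df (x,t) (0,h))) (at t)"
    using has_derivative_compose[OF p, of "\<lambda>q. f (fst q) (snd q)" "Df (x,t)"] q by simp
  interpret bl: bounded_linear "Df (x,t)" by (rule has_derivative_bounded_linear[OF q])
  have "(\<lambda>h. Df (x,t) (0,h)) = (\<lambda>h. Df (x,t) (0,1) * h)"
  proof
    fix h :: real
    have "Df (x,t) (0,h) = Df (x,t) (h *\<^sub>R (0,1))" by simp
    also have "\<dots> = h * Df (x,t) (0,1)" by (simp only: bl.scaleR) simp
    finally show "Df (x,t) (0,h) = Df (x,t) (0,1) * h" by simp
  qed
  then show ?thesis using c unfolding has_field_derivative_def by simp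
qed

lemma C2_lined:
  assumes "C2_on S u" "y \<in> S"
  shows "lined u i y (partial u i y)" and "lined (partial u i) j y (partial (partial u i) j y)"
proof -
  have "(\<lambda>t. u (y + t *\<^sub>R axis i 1)) differentiable (at 0)" using assms by (auto simp: C2_on_def)
  then show "lined u i y (partial u i y)"
    unfolding lined_def partial_def by (simp add: DERIV_deriv_iff_real_differentiable)
  have "(\<lambda>t. partial u i (y + t *\<^sub>R axis j 1)) differentiable (at 0)" using assms by (auto simp: C2_on_def)
  then show "lined (partial u i) j y (partial (partial u i) j y)"
    unfolding lined_def by (simp add: partial_def[of "partial u i"] DERIV_deriv_iff_real_differentiable)
qed


lemma one_side:
  fixes \<Omega> :: "(real^'n) set" and f :: "real^'n \<Rightarrow> real \<Rightarrow> real" and u v :: "real^'n \<Rightarrow> real"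
  assumes op: "open \<Omega>" and ne: "\<Omega> \<noteq> {}" and bd: "bounded \<Omega>"
    and C11: "C11_nonlin \<Omega> f" and cvx: "\<forall>x\<in>\<Omega>. convex_on UNIV (\<lambda>t. f x t)"
    and su: "is_solution \<Omega> f u" and st: "stable \<Omega> f u" and sv: "is_solution \<Omega> f v"
  shows "\<forall>x\<in>\<Omega>. u x \<le> v x"
proof -
  obtain Df where Dfd: "\<forall>p\<in>\<Omega> \<times> UNIV. ((\<lambda>q. f (fst q) (snd q)) has_derivative Df p) (at p)"
    and Lip: "\<And>M::real. \<exists>L. \<forall>p\<in>\<Omega> \<times> {-M..M}. \<forall>q\<in>\<Omega> \<times> {-M..M}. onorm (\<lambda>h. Df p h - Df q h) \<le> L * dist p q"
    using C11 unfolding C11_nonlin_def by blast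
  have uC2: "C2_on \<Omega> u" and ucl: "continuous_on (closure \<Omega>) u"
    and ueq: "\<And>x. x \<in> \<Omega> \<Longrightarrow> - laplacian u x = f x (u x)" and ufr: "\<And>x. x \<in> frontier \<Omega> \<Longrightarrow> u x = 0"
    using su by (auto simp: is_solution_def)
  have vC2: "C2_on \<Omega> v" and vcl: "continuous_on (closure \<Omega>) v"
    and veq: "\<And>x. x \<in> \<Omega> \<Longrightarrow> - laplacian v x = f x (v x)" and vfr: "\<And>x. x \<in> frontier \<Omega> \<Longrightarrow> v x = 0"
    using sv by (auto simp: is_solution_def)
  have uc: "continuous_on \<Omega> u" using uC2 by (simp add: C2_on_def)
  obtain M where M: "\<And>x. x \<in> \<Omega> \<Longrightarrow> \<bar>u x\<bar> \<le> M"
  proof -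
    have "compact (u ` closure \<Omega>)" using bd ucl by (intro compact_continuous_image) auto
    then have "bounded (u ` closure \<Omega>)" by (rule compact_imp_bounded)
    then obtain M where "\<forall>y\<in>u ` closure \<Omega>. norm y \<le> M" by (auto simp: bounded_iff)
    then have "\<And>x. x \<in> closure \<Omega> \<Longrightarrow> \<bar>u x\<bar> \<le> M" by auto
    then show ?thesis using that closure_subset by blast
  qed
  obtain L where L: "\<forall>p\<in>\<Omega> \<times> {-M..M}. \<forall>q\<in>\<Omega> \<times> {-M..M}. onorm (\<lambda>h. Df p h - Df q h) \<le> L * dist p q"
    using Lip by blast
  define g where "g p = Df p (0::real^'n, 1::real)" for p
  define a where "a x = g (x, u x)" for x
  have gL: "\<bar>g p - g q\<bar> \<le> \<bar>L\<bar> * dist p q" if p: "p \<in> \<Omega> \<times> {-M..M}" and q: "q \<in> \<Omega> \<times> {-M..M}" for p q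
  proof -
    have bp: "bounded_linear (Df p)" using Dfd p by (auto intro: has_derivative_bounded_linear)
    have bq: "bounded_linear (Df q)" using Dfd q by (auto intro: has_derivative_bounded_linear)
    have "bounded_linear (\<lambda>h. Df p h - Df q h)" by (rule bounded_linear_sub[OF bp bq])
    then have "norm (Df p (0::real^'n, 1::real) - Df q (0, 1)) \<le> onorm (\<lambda>h. Df p h - Df q h) * norm (0::real^'n, 1::real)"
      by (rule onorm)
    also have "norm (0::real^'n, 1::real) = 1" by (simp add: norm_Pair)
    finally have "\<bar>g p - g q\<bar> \<le> onorm (\<lambda>h. Df p h - Df q h)" by (simp add: g_def)
    also have "\<dots> \<le> L * dist p q" using L p q by blast
    also have "\<dots> \<le> \<bar>L\<bar> * dist p q" by (simp add: mult_right_mono)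
    finally show ?thesis .
  qed
  have inbox: "(x, u x) \<in> \<Omega> \<times> {-M..M}" if "x \<in> \<Omega>" for x using M[OF that] that by auto
  obtain x0 where x0: "x0 \<in> \<Omega>" using ne by blast
  obtain B where B: "\<And>x. x \<in> \<Omega> \<Longrightarrow> norm x \<le> B" using bd by (auto simp: bounded_iff)
  define A where "A = \<bar>a x0\<bar> + \<bar>L\<bar> * (2 * B + 2 * M)"
  have aA: "\<bar>a x\<bar> \<le> A" if x: "x \<in> \<Omega>" for x
  proof -
    have "dist (x, u x) (x0, u x0) = norm (x - x0, u x - u x0)" by (simp add: dist_norm)
    also have "\<dots> \<le> norm (x - x0) + norm (u x - u x0)" by (rule norm_Pair_le)
    also have "\<dots> \<le> (norm x + norm x0) + (\<bar>u x\<bar> + \<bar>u x0\<bar>)"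
      by (intro add_mono norm_triangle_ineq4) (simp add: abs_triangle_ineq4)
    also have "\<dots> \<le> 2 * B + 2 * M" using B[OF x] B[OF x0] M[OF x] M[OF x0] by simp
    finally have dd: "dist (x, u x) (x0, u x0) \<le> 2 * B + 2 * M" .
    have "\<bar>a x - a x0\<bar> \<le> \<bar>L\<bar> * dist (x, u x) (x0, u x0)"
      unfolding a_def by (rule gL[OF inbox[OF x] inbox[OF x0]])
    also have "\<dots> \<le> \<bar>L\<bar> * (2 * B + 2 * M)" using dd by (simp add: mult_left_mono)
    finally show ?thesis unfolding A_def by linarith
  qed
  have ac: "continuous_on \<Omega> a"
  proof -
    have "lipschitz_on \<bar>L\<bar> (\<Omega> \<times> {-M..M}) g"
      unfolding lipschitz_on_def using gL by (simp add: dist_real_def)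
    then have gc: "continuous_on (\<Omega> \<times> {-M..M}) g" by (rule lipschitz_on_continuous_on)
    have "continuous_on \<Omega> (\<lambda>x. (x, u x))" by (intro continuous_intros uc)
    then show ?thesis unfolding a_def
      by (rule continuous_on_compose2[OF gc]) (use inbox in auto)
  qed
  have fder: "((\<lambda>s. f x s) has_real_derivative g (x,t)) (at t)" if "x \<in> \<Omega>" for x t
    unfolding g_def by (rule f_deriv[OF Dfd that])
  have fu_eq: "fu f x (u x) = a x" if "x \<in> \<Omega>" for x
    unfolding fu_def a_def by (rule DERIV_imp_deriv[OF fder[OF that]])
  have tang: "f x (v x) - f x (u x) \<ge> a x * (v x - u x)" if x: "x \<in> \<Omega>" for x
  proof (rule convex_on_imp_above_tangent[where A = UNIV])
    show "convex_on UNIV (\<lambda>t. f x t)" using cvx x by blast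
    show "((\<lambda>t. f x t) has_real_derivative a x) (at (u x) within UNIV)"
      using fder[OF x, of "u x"] by (simp add: a_def)
  qed auto
  define w where "w x = u x - v x" for x
  define Dw where "Dw i x = partial u i x - partial v i x" for i x
  define Dii where "Dii i x = partial (partial u i) i x - partial (partial v i) i x" for i x
  interpret S: setting \<Omega> w Dw Dii a A
  proof
    show "open \<Omega>" by (rule op)
    show "bounded \<Omega>" by (rule bd)
    show "continuous_on (closure \<Omega>) w" unfolding w_def[abs_def] by (intro continuous_intros ucl vcl)
    show "w x = 0" if "x \<in> frontier \<Omega>" for x using ufr[OF that] vfr[OF that] by (simp add: w_def)
    show "lined w i y (Dw i y)" if "y \<in> \<Omega>" for i y
      using DERIV_diff[OF C2_lined(1)[OF uC2 that, of i, unfolded lined_def] C2_lined(1)[OF vC2 that, of i, unfolded lined_def]]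
      unfolding lined_def w_def Dw_def by simp
    show "continuous_on \<Omega> (Dw i)" for i
      unfolding Dw_def[abs_def] using uC2 vC2 by (intro continuous_intros) (auto simp: C2_on_def)
    show "lined (Dw i) i y (Dii i y)" if "y \<in> \<Omega>" for i y
      using DERIV_diff[OF C2_lined(2)[OF uC2 that, of i i, unfolded lined_def] C2_lined(2)[OF vC2 that, of i i, unfolded lined_def]]
      unfolding lined_def Dii_def Dw_def by simp
    show "continuous_on \<Omega> (Dii i)" for i
      unfolding Dii_def[abs_def] using uC2 vC2 by (intro continuous_intros) (auto simp: C2_on_def)
    show "- (\<Sum>i\<in>UNIV. Dii i y) \<le> a y * w y" if y: "y \<in> \<Omega>" for y
    proof -
      have "- (\<Sum>i\<in>UNIV. Dii i y) = - laplacian u y - (- laplacian v y)"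
        by (simp add: Dii_def laplacian_def sum_subtractf)
      also have "\<dots> = f y (u y) - f y (v y)" using ueq[OF y] veq[OF y] by simp
      also have "\<dots> \<le> a y * w y" using tang[OF y] by (simp add: w_def algebra_simps)
      finally show ?thesis .
    qed
    show "continuous_on \<Omega> a" by (rule ac)
    show "\<bar>a y\<bar> \<le> A" if "y \<in> \<Omega>" for y by (rule aA[OF that])
  qed
  have Om: "\<Omega> \<in> sets lebesgue" using op by (intro sets_completionI_sets) simp
  have stab: "(LINT x:\<Omega>|lebesgue. (norm (g' x))^2) - (LINT x:\<Omega>|lebesgue. a x * (\<phi> x)^2) > 0"
    if "H10 \<Omega> \<phi> g'" "\<not> (AE x in lebesgue. x \<in> \<Omega> \<longrightarrow> \<phi> x = 0)" for \<phi> g'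
  proof -
    have "(LINT x:\<Omega>|lebesgue. (norm (g' x))^2) - (LINT x:\<Omega>|lebesgue. fu f x (u x) * (\<phi> x)^2) > 0"
      using st that unfolding stable_def by blast
    moreover have "(LINT x:\<Omega>|lebesgue. fu f x (u x) * (\<phi> x)^2) = (LINT x:\<Omega>|lebesgue. a x * (\<phi> x)^2)"
      by (rule set_lebesgue_integral_cong[OF Om]) (simp add: fu_eq)
    ultimately show ?thesis by simp
  qed
  show ?thesis
  proof
    fix x assume x: "x \<in> \<Omega>"
    have "w x \<le> 0" by (rule S.w_nonpos[OF stab x]) auto
    then show "u x \<le> v x" by (simp add: w_def)
  qed
qed

theorem lemma3p1:
  fixes \<Omega> :: "(real^'n) set" and k :: 'n
    and f :: "real^'n \<Rightarrow> real \<Rightarrow> real" and u v :: "real^'n \<Rightarrow> real"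
  assumes "CARD('n) \<ge> 3"
    and "open \<Omega>" and "connected \<Omega>" and "\<Omega> \<noteq> {}" and "bounded \<Omega>"
    and "simple_rot_sym k \<Omega>"
    and "C11_nonlin \<Omega> f"
    and "\<forall>x\<in>\<Omega>. convex_on UNIV (\<lambda>t. f x t)"
    and "is_solution \<Omega> f u" and "\<forall>x\<in>\<Omega>. u x > 0" and "stable \<Omega> f u"
    and "is_solution \<Omega> f v" and "\<forall>x\<in>\<Omega>. v x > 0" and "stable \<Omega> f v"
  shows "\<forall>x\<in>\<Omega>. u x = v x"
proof -
  have "\<forall>x\<in>\<Omega>. u x \<le> v x"
    by (rule one_side) (use assms in auto)
  moreover have "\<forall>x\<in>\<Omega>. v x \<le> u x"
    by (rule one_side) (use assms in auto)
  ultimately show ?thesis by (auto intro: order_antisym)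
qed

end
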